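(* Let $m,n\in\mathbb{N}$, $A\in\mathcal{A}(\bm{p})^{m\times n}$ and $b\in\mathcal{A}(\bm{p})^{m\times1}$. The following are equivalent: (1) there exists $x\in\mathcal{A}(\bm{p})^{n\times1}$ with $A\ast x=b$; (2) there exists $\delta>0$ such that for all $k\in\mathbb{N}_0$ and all $y\in\mathbb{C}^{m\times1}$, $\|(\widehat A(k))^*y\|_2\ge\delta\,|\langle y,\widehat b(k)\rangle_2|$.
   Context: Fix $\bm{p}:\mathbb{N}_0\to(0,\infty)$ with $\lim_{n\to\infty}\bm{p}(n)^{1/n}=\infty$. For an entire function $f$ write $f(z)=\sum_{n\ge0}\widehat f(n)z^n$. $\mathcal{A}(\bm{p})$ is the set of entire functions $f$ with $\sup_{n\ge 0}\bm{p}(n)|\widehat f(n)|<\infty$, with pointwise addition and scalar multiplication and the weighted Hadamard product $(f\ast g)(z)=\sum_{n\ge0}\bm{p}(n)\widehat f(n)\widehat g(n)z^n$. Matrix products of matrices over $\mathcal{A}(\bm{p})$ use $\ast$ for entrywise multiplication. For a matrix $A=[a_{ij}]$ with entries in $\mathcal{A}(\bm{p})$ and $k\in\mathbb{N}_0$, $\widehat A(k)$ is the complex matrix $[\widehat{a_{ij}}(k)]$. $\langle\cdot,\cdot\rangle_2$ is the Euclidean inner product on $\mathbb{C}^{m\times 1}$, $\|\cdot\|_2$ the Euclidean norm, and $M^*$ the conjugate transpose of a complex matrix $M$. *)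

theory Defs
  imports "HOL-Analysis.Analysis"
begin

definition coef :: "(complex \<Rightarrow> complex) \<Rightarrow> nat \<Rightarrow> complex" where
  "coef f n = (deriv ^^ n) f 0 / of_nat (fact n)"

definition admissible_weight :: "(nat \<Rightarrow> real) \<Rightarrow> bool" where
  "admissible_weight p \<longleftrightarrow> (\<forall>n. p n > 0) \<and> filterlim (\<lambda>n. root n (p n)) at_top sequentially"

definition Ap :: "(nat \<Rightarrow> real) \<Rightarrow> (complex \<Rightarrow> complex) set" where
  "Ap p = {f. f holomorphic_on UNIV \<and> bdd_above (range (\<lambda>n. p n * cmod (coef f n)))}"

definition hprod :: "(nat \<Rightarrow> real) \<Rightarrow> (complex \<Rightarrow> complex) \<Rightarrow> (complex \<Rightarrow> complex) \<Rightarrow> complex \<Rightarrow> complex" where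
  "hprod p f g = (\<lambda>z. \<Sum>n. of_real (p n) * coef f n * coef g n * z ^ n)"

definition mat_hprod :: "(nat \<Rightarrow> real) \<Rightarrow> nat \<Rightarrow> (nat \<Rightarrow> nat \<Rightarrow> complex \<Rightarrow> complex)
    \<Rightarrow> (nat \<Rightarrow> complex \<Rightarrow> complex) \<Rightarrow> nat \<Rightarrow> complex \<Rightarrow> complex" where
  "mat_hprod p n A x = (\<lambda>i z. \<Sum>j<n. hprod p (A i j) (x j) z)"

definition adj_apply_norm :: "nat \<Rightarrow> nat \<Rightarrow> (nat \<Rightarrow> nat \<Rightarrow> complex) \<Rightarrow> (nat \<Rightarrow> complex) \<Rightarrow> real" where
  "adj_apply_norm m n M y = sqrt (\<Sum>j<n. (cmod (\<Sum>i<m. cnj (M i j) * y i))\<^sup>2)"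

definition inner2 :: "nat \<Rightarrow> (nat \<Rightarrow> complex) \<Rightarrow> (nat \<Rightarrow> complex) \<Rightarrow> complex" where
  "inner2 m y w = (\<Sum>i<m. y i * cnj (w i))"

end

theory Submission
  imports Defs "HOL-Complex_Analysis.Complex_Analysis"
begin

lemma sum_delta_mult:
  fixes f :: "nat \<Rightarrow> 'a::comm_ring_1"
  assumes "r < m"
  shows "(\<Sum>i<m. (if i = r then a else 0) * f i) = a * f r"
proof -
  have "(\<Sum>i<m. (if i = r then a else 0) * f i) = (\<Sum>i<m. if i = r then a * f r else 0)"
    by (intro sum.cong) auto
  also have "\<dots> = a * f r" using assms by (simp add: sum.delta)
  finally show ?thesis .
qed

lemma fredholm:
  fixes M :: "nat \<Rightarrow> nat \<Rightarrow> 'a::field" and b :: "nat \<Rightarrow> 'a"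
  shows "(\<exists>v. \<forall>i<m. (\<Sum>j<n. M i j * v j) = b i) \<or>
         (\<exists>y. (\<forall>j<n. (\<Sum>i<m. y i * M i j) = 0) \<and> (\<Sum>i<m. y i * b i) \<noteq> 0)"
proof (induction n arbitrary: M b)
  case 0
  show ?case
  proof (cases "\<forall>i<m. b i = 0")
    case True then show ?thesis by auto
  next
    case False
    then obtain r where r: "r < m" "b r \<noteq> 0" by auto
    have "(\<Sum>i<m. (if i = r then 1 else 0) * b i) = b r"
      using sum_delta_mult[OF r(1), of 1 b] by simp
    then show ?thesis using r by (intro disjI2 exI[of _ "\<lambda>i. if i = r then 1 else 0"]) auto
  qed
next
  case (Suc n)
  show ?case
  proof (cases "\<forall>i<m. M i n = 0")
    case True
    from Suc.IH[of M b] show ?thesis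
    proof
      assume "\<exists>v. \<forall>i<m. (\<Sum>j<n. M i j * v j) = b i"
      then show ?thesis using True by auto
    next
      assume "\<exists>y. (\<forall>j<n. (\<Sum>i<m. y i * M i j) = 0) \<and> (\<Sum>i<m. y i * b i) \<noteq> 0"
      then obtain y where y: "\<forall>j<n. (\<Sum>i<m. y i * M i j) = 0" "(\<Sum>i<m. y i * b i) \<noteq> 0" by blast
      have "\<forall>j<Suc n. (\<Sum>i<m. y i * M i j) = 0"
        using y(1) True by (auto simp: less_Suc_eq)
      then show ?thesis using y(2) by blast
    qed
  next
    case False
    then obtain r where r: "r < m" "M r n \<noteq> 0" by auto
    define c where "c = M r n"
    define M' where "M' i j = M i j - M i n / c * M r j" for i j
    define b' where "b' i = b i - M i n / c * b r" for i
    from Suc.IH[of M' b'] show ?thesis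
    proof
      assume "\<exists>v. \<forall>i<m. (\<Sum>j<n. M' i j * v j) = b' i"
      then obtain v' where v': "\<forall>i<m. (\<Sum>j<n. M' i j * v' j) = b' i" by blast
      define v where "v = v'(n := (b r - (\<Sum>j<n. M r j * v' j)) / c)"
      have "(\<Sum>j<Suc n. M i j * v j) = b i" if i: "i < m" for i
      proof -
        have s: "(\<Sum>j<n. M i j * v j) = (\<Sum>j<n. M i j * v' j)"
          unfolding v_def by (intro sum.cong) auto
        have e: "(\<Sum>j<n. M' i j * v' j) = (\<Sum>j<n. M i j * v' j) - M i n / c * (\<Sum>j<n. M r j * v' j)"
          unfolding M'_def by (simp add: algebra_simps sum_subtractf sum_distrib_left)
        have "(\<Sum>j<Suc n. M i j * v j) = (\<Sum>j<n. M i j * v' j) + M i n * ((b r - (\<Sum>j<n. M r j * v' j)) / c)"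
          using s by (simp add: v_def)
        also have "\<dots> = b i"
        proof -
          have h: "(\<Sum>j<n. M i j * v' j) = b i - M i n / c * b r + M i n / c * (\<Sum>j<n. M r j * v' j)"
          proof -
            have vi: "(\<Sum>j<n. M' i j * v' j) = b i - M i n / c * b r" using v' i b'_def by simp
            show ?thesis using vi e by (metis diff_add_cancel)
          qed
          have cn: "c \<noteq> 0" using c_def r(2) by simp
          show ?thesis unfolding h using cn by (simp add: field_simps)
        qed
        finally show ?thesis .
      qed
      then show ?thesis by blast
    next
      assume "\<exists>y. (\<forall>j<n. (\<Sum>i<m. y i * M' i j) = 0) \<and> (\<Sum>i<m. y i * b' i) \<noteq> 0"
      then obtain y' where y': "\<forall>j<n. (\<Sum>i<m. y' i * M' i j) = 0" "(\<Sum>i<m. y' i * b' i) \<noteq> 0" by blast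
      define s where "s = (\<Sum>l<m. y' l * M l n)"
      define y where "y i = y' i - (if i = r then s / c else 0)" for i
      have gen: "(\<Sum>i<m. y i * f i) = (\<Sum>i<m. y' i * f i) - s / c * f r" for f
      proof -
        have "(\<Sum>i<m. y i * f i) = (\<Sum>i<m. y' i * f i) - (\<Sum>i<m. (if i = r then s / c else 0) * f i)"
          unfolding y_def by (simp add: algebra_simps sum_subtractf)
        then show ?thesis using sum_delta_mult[OF r(1), of "s / c" f] by simp
      qed
      have gen': "(\<Sum>i<m. y' i * (f i - M i n / c * g)) = (\<Sum>i<m. y' i * f i) - s / c * g" for f g
        unfolding s_def by (simp add: algebra_simps sum_subtractf sum_distrib_left sum_distrib_right sum_divide_distrib)
      have "\<forall>j<Suc n. (\<Sum>i<m. y i * M i j) = 0"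
      proof (intro allI impI)
        fix j assume j: "j < Suc n"
        show "(\<Sum>i<m. y i * M i j) = 0"
        proof (cases "j = n")
          case True
          then show ?thesis using gen[of "\<lambda>i. M i n"] c_def r(2) s_def by simp
        next
          case False
          then have "j < n" using j by simp
          then show ?thesis using y'(1) gen[of "\<lambda>i. M i j"] gen'[of "\<lambda>i. M i j" "M r j"]
            unfolding M'_def by simp
        qed
      qed
      moreover have "(\<Sum>i<m. y i * b i) \<noteq> 0"
        using y'(2) gen[of b] gen'[of b "b r"] unfolding b'_def by simp
      ultimately show ?thesis by blast
    qed
  qed
qed


lemma conv_inf:
  fixes c :: "nat \<Rightarrow> complex"
  assumes adm: "admissible_weight p" and bd: "\<And>n. cmod (c n) \<le> K / p n"
  shows "conv_radius c = \<infinity>"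
proof -
  have pp: "\<And>n. p n > 0" and lim: "filterlim (\<lambda>n. root n (p n)) at_top sequentially"
    using adm unfolding admissible_weight_def by auto
  have "0 \<le> K / p 0" using bd[of 0] by (meson norm_ge_zero order_trans)
  then have K0: "K \<ge> 0" using pp[of 0] by (simp add: zero_le_divide_iff)
  have "conv_radius c \<ge> \<infinity>"
  proof (rule conv_radius_geI_ex')
    fix r :: real assume r: "0 < r"
    have ev: "eventually (\<lambda>n. root n (p n) \<ge> 2 * r \<and> n \<ge> 1) sequentially"
    proof -
      have "eventually (\<lambda>n. 2 * r \<le> root n (p n)) sequentially"
        using lim unfolding filterlim_at_top by blast
      then show ?thesis using eventually_ge_at_top[of "1::nat"] by (rule eventually_conj)
    qed
    have "eventually (\<lambda>n. norm (c n * of_real r ^ n) \<le> K * (1/2) ^ n) sequentially"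
      using ev
    proof eventually_elim
      case (elim n)
      have "(2 * r) ^ n \<le> root n (p n) ^ n"
        using elim r by (intro power_mono) auto
      also have "\<dots> = p n" using elim pp[of n] by (simp add: real_root_pow_pos2 less_imp_le)
      finally have pn: "(2*r)^n \<le> p n" .
      have "norm (c n * of_real r ^ n) = cmod (c n) * r ^ n" using r by (simp add: norm_mult norm_power)
      also have "\<dots> \<le> K / p n * r ^ n" using bd r by (intro mult_right_mono) auto
      also have "\<dots> \<le> K * (1/2)^n"
      proof -
        have "K / p n * r ^ n = K * (r^n / p n)" by simp
        also have "r^n / p n \<le> r^n / (2*r)^n"
          using pn r pp[of n] by (intro divide_left_mono) auto
        also have "r^n / (2*r)^n = (1/2)^n" using r by (simp add: power_mult_distrib power_divide)
        finally show ?thesis using K0 by (simp add: mult_left_mono)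
      qed
      finally show ?case .
    qed
    moreover have "summable (\<lambda>n. K * (1/2::real) ^ n)"
      by (intro summable_mult summable_geometric) auto
    ultimately show "summable (\<lambda>n. c n * of_real r ^ n)"
      by (rule summable_comparison_test_ev)
  qed
  then show ?thesis by (simp add: top.extremum_unique)
qed

lemma entire_series:
  fixes c :: "nat \<Rightarrow> complex"
  assumes "conv_radius c = \<infinity>"
  shows "(\<lambda>z. \<Sum>n. c n * z ^ n) holomorphic_on UNIV"
    and "coef (\<lambda>z. \<Sum>n. c n * z ^ n) k = c k"
proof -
  have e: "(\<lambda>z. \<Sum>n. c n * z ^ n) = eval_fps (Abs_fps c)"
    by (simp add: eval_fps_def fun_eq_iff)
  have r: "fps_conv_radius (Abs_fps c) = \<infinity>" using assms by (simp add: fps_conv_radius_def)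
  show "(\<lambda>z. \<Sum>n. c n * z ^ n) holomorphic_on UNIV"
    unfolding e by (rule holomorphic_on_eval_fps) (simp add: r)
  have "fps_nth (Abs_fps c) k = (deriv ^^ k) (eval_fps (Abs_fps c)) 0 / fact k"
    by (rule fps_nth_conv_deriv) (simp add: r)
  then show "coef (\<lambda>z. \<Sum>n. c n * z ^ n) k = c k"
    unfolding e coef_def by simp
qed

lemma taylor_entire:
  assumes "f holomorphic_on UNIV"
  shows "(\<lambda>n. coef f n * z ^ n) sums f z"
proof -
  have "(\<lambda>n. (deriv ^^ n) f 0 / (fact n) * (z - 0)^n) sums f z"
    by (rule holomorphic_power_series[where r = "norm z + 1"])
       (auto intro: holomorphic_on_subset[OF assms])
  then show ?thesis by (simp add: coef_def)
qed

lemma coef_unique_entire: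
  assumes "f holomorphic_on UNIV" "g holomorphic_on UNIV" "\<And>n. coef f n = coef g n"
  shows "f = g"
proof
  fix z
  show "f z = g z"
    using taylor_entire[OF assms(1), of z] taylor_entire[OF assms(2), of z] assms(3)
    by (simp add: sums_unique2)
qed

lemma coef_sum:
  fixes n :: nat
  assumes "\<And>j. j < n \<Longrightarrow> f j holomorphic_on UNIV"
  shows "coef (\<lambda>z. \<Sum>j<n. f j z) k = (\<Sum>j<n. coef (f j) k)"
  using assms
proof (induction n)
  case 0
  have "(deriv ^^ k) (\<lambda>z::complex. 0::complex) = (\<lambda>z. 0)"
    by (induction k) auto
  then show ?case by (simp add: coef_def)
next
  case (Suc n)
  have h1: "(\<lambda>z. \<Sum>j<n. f j z) holomorphic_on UNIV"
    using Suc.prems by (intro holomorphic_on_sum) auto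
  have h2: "f n holomorphic_on UNIV" using Suc.prems by auto
  have "coef (\<lambda>z. \<Sum>j<Suc n. f j z) k = coef (\<lambda>z. (\<Sum>j<n. f j z) + f n z) k" by simp
  also have "\<dots> = coef (\<lambda>z. \<Sum>j<n. f j z) k + coef (f n) k"
    unfolding coef_def using higher_deriv_add[OF h1 h2, of 0 k]
    by (simp add: add_divide_distrib)
  also have "\<dots> = (\<Sum>j<Suc n. coef (f j) k)" using Suc by simp
  finally show ?case .
qed

lemma Ap_bound:
  assumes "admissible_weight p" "f \<in> Ap p"
  obtains C where "C \<ge> 0" "\<And>n. p n * cmod (coef f n) \<le> C"
proof -
  from assms(2) obtain C where C: "\<And>n. p n * cmod (coef f n) \<le> C"
    unfolding Ap_def bdd_above_def by auto
  have "C \<ge> 0" using C[of 0] assms(1) unfolding admissible_weight_def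
    by (meson mult_nonneg_nonneg norm_ge_zero order_trans less_imp_le)
  then show ?thesis using C that by blast
qed

lemma hprod_props:
  assumes adm: "admissible_weight p" and f: "f \<in> Ap p" and g: "g \<in> Ap p"
  shows "hprod p f g holomorphic_on UNIV"
    and "coef (hprod p f g) k = of_real (p k) * coef f k * coef g k"
proof -
  have pp: "\<And>n. p n > 0" using adm unfolding admissible_weight_def by auto
  obtain Cf where Cf: "Cf \<ge> 0" "\<And>n. p n * cmod (coef f n) \<le> Cf" using Ap_bound[OF adm f] by blast
  obtain Cg where Cg: "Cg \<ge> 0" "\<And>n. p n * cmod (coef g n) \<le> Cg" using Ap_bound[OF adm g] by blast
  define c where "c n = of_real (p n) * coef f n * coef g n" for n
  have bd: "cmod (c n) \<le> (Cf * Cg) / p n" for n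
  proof -
    have "cmod (c n) * p n = (p n * cmod (coef f n)) * (p n * cmod (coef g n))"
      unfolding c_def using pp[of n] by (simp add: norm_mult algebra_simps)
    also have "\<dots> \<le> Cf * Cg" using Cf Cg pp[of n] by (intro mult_mono) auto
    finally show ?thesis using pp[of n] by (simp add: field_simps)
  qed
  have ci: "conv_radius c = \<infinity>" by (rule conv_inf[OF adm bd])
  have e: "hprod p f g = (\<lambda>z. \<Sum>n. c n * z ^ n)" unfolding hprod_def c_def by simp
  show "hprod p f g holomorphic_on UNIV" unfolding e by (rule entire_series(1)[OF ci])
  show "coef (hprod p f g) k = of_real (p k) * coef f k * coef g k"
  proof -
    have "coef (hprod p f g) k = c k" unfolding e by (rule entire_series(2)[OF ci])
    then show ?thesis by (simp add: c_def)
  qed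
qed


lemma solve:
  fixes M :: "nat \<Rightarrow> nat \<Rightarrow> complex" and bb :: "nat \<Rightarrow> complex"
  assumes d: "\<delta> > 0" and H: "\<forall>y. adj_apply_norm m n M y \<ge> \<delta> * cmod (inner2 m y bb)"
  shows "\<exists>v. (\<forall>i<m. (\<Sum>j<n. M i j * v j) = bb i) \<and> (\<forall>j<n. cmod (v j) \<le> 1/\<delta>)"
proof -
  define N where "N i l = (\<Sum>j<n. M i j * cnj (M l j))" for i l
  from fredholm[where M=N and b=bb and m=m and n=m] consider (sol) u where "\<forall>i<m. (\<Sum>l<m. N i l * u l) = bb i"
     | (cert) y where "\<forall>l<m. (\<Sum>i<m. y i * N i l) = 0" "(\<Sum>i<m. y i * bb i) \<noteq> 0" by blast
  then show ?thesis
  proof cases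
    case cert
    define w where "w j = (\<Sum>i<m. y i * M i j)" for j
    have cw: "cnj (w j) = (\<Sum>l<m. cnj (y l) * cnj (M l j))" for j
      by (simp add: w_def cnj_sum)
    have inner: "(\<Sum>j<n. w j * cnj (M l j)) = (\<Sum>i<m. y i * N i l)" for l
    proof -
      have "(\<Sum>j<n. w j * cnj (M l j)) = (\<Sum>j<n. \<Sum>i<m. y i * (M i j * cnj (M l j)))"
        unfolding w_def by (simp add: sum_distrib_right mult.assoc)
      also have "\<dots> = (\<Sum>i<m. \<Sum>j<n. y i * (M i j * cnj (M l j)))" by (rule sum.swap)
      also have "\<dots> = (\<Sum>i<m. y i * N i l)" unfolding N_def by (simp add: sum_distrib_left)
      finally show ?thesis .
    qed
    have key: "(\<Sum>j<n. w j * cnj (w j)) = 0"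
    proof -
      have "(\<Sum>j<n. w j * cnj (w j)) = (\<Sum>j<n. \<Sum>l<m. cnj (y l) * (w j * cnj (M l j)))"
        unfolding cw by (simp add: sum_distrib_left mult.assoc mult.left_commute)
      also have "\<dots> = (\<Sum>l<m. \<Sum>j<n. cnj (y l) * (w j * cnj (M l j)))" by (rule sum.swap)
      also have "\<dots> = (\<Sum>l<m. cnj (y l) * (\<Sum>i<m. y i * N i l))"
        by (simp add: sum_distrib_left[symmetric] inner)
      also have "\<dots> = 0" using cert(1) by simp
      finally show ?thesis .
    qed
    have "complex_of_real (\<Sum>j<n. (cmod (w j))\<^sup>2) = (\<Sum>j<n. w j * cnj (w j))"
      by (simp only: of_real_sum complex_norm_square)
    then have "(\<Sum>j<n. (cmod (w j))\<^sup>2) = 0" using key of_real_eq_0_iff by metis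
    then have w0: "\<forall>j<n. w j = 0"
      by (simp add: sum_nonneg_eq_0_iff)
    define y' where "y' i = cnj (y i)" for i
    have "adj_apply_norm m n M y' = 0"
    proof -
      have "(\<Sum>i<m. cnj (M i j) * y' i) = cnj (w j)" for j
        by (simp add: y'_def w_def cnj_sum mult.commute)
      then show ?thesis unfolding adj_apply_norm_def using w0 by simp
    qed
    moreover have "inner2 m y' bb = cnj (\<Sum>i<m. y i * bb i)"
      by (simp add: inner2_def y'_def cnj_sum)
    ultimately have "0 \<ge> \<delta> * cmod (cnj (\<Sum>i<m. y i * bb i))" using H by metis
    moreover have "\<delta> * cmod (cnj (\<Sum>i<m. y i * bb i)) > 0"
      using d cert(2) by (intro mult_pos_pos) (simp_all only: complex_mod_cnj zero_less_norm_iff not_False_eq_True)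
    ultimately show ?thesis by simp
  next
    case sol
    define v where "v j = (\<Sum>l<m. cnj (M l j) * u l)" for j
    have Mv: "\<forall>i<m. (\<Sum>j<n. M i j * v j) = bb i"
    proof (intro allI impI)
      fix i assume i: "i < m"
      have "(\<Sum>j<n. M i j * v j) = (\<Sum>j<n. \<Sum>l<m. M i j * cnj (M l j) * u l)"
        unfolding v_def by (simp add: sum_distrib_left mult.assoc)
      also have "\<dots> = (\<Sum>l<m. \<Sum>j<n. M i j * cnj (M l j) * u l)" by (rule sum.swap)
      also have "\<dots> = (\<Sum>l<m. N i l * u l)" unfolding N_def by (simp add: sum_distrib_right)
      finally show "(\<Sum>j<n. M i j * v j) = bb i" using sol i by simp
    qed
    define S where "S = (\<Sum>j<n. (cmod (v j))\<^sup>2)"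
    have S0: "S \<ge> 0" unfolding S_def by (intro sum_nonneg) auto
    have adj: "adj_apply_norm m n M u = sqrt S"
      unfolding adj_apply_norm_def S_def v_def ..
    have inn: "inner2 m u bb = complex_of_real S"
    proof -
      have "inner2 m u bb = (\<Sum>i<m. u i * cnj (\<Sum>j<n. M i j * v j))"
        unfolding inner2_def using Mv by (intro sum.cong) auto
      also have "\<dots> = (\<Sum>i<m. \<Sum>j<n. cnj (v j) * (cnj (M i j) * u i))"
        by (simp add: cnj_sum sum_distrib_left mult.commute mult.left_commute)
      also have "\<dots> = (\<Sum>j<n. \<Sum>i<m. cnj (v j) * (cnj (M i j) * u i))" by (rule sum.swap)
      also have "\<dots> = (\<Sum>j<n. cnj (v j) * v j)"
        by (simp add: sum_distrib_left[symmetric] v_def)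
      also have "\<dots> = complex_of_real S"
        unfolding S_def of_real_sum complex_norm_square by (simp add: mult.commute)
      finally show ?thesis .
    qed
    have ineq: "sqrt S \<ge> \<delta> * S" using H[rule_format, of u] adj inn S0 by simp
    have sS: "sqrt S \<le> 1 / \<delta>"
    proof (cases "S = 0")
      case True then show ?thesis using d by simp
    next
      case False
      then have sp: "sqrt S > 0" using S0 by simp
      have "sqrt S \<ge> \<delta> * (sqrt S * sqrt S)" using ineq S0 by simp
      then have "1 \<ge> \<delta> * sqrt S" using sp
        by (metis mult.left_commute mult.right_neutral mult_le_cancel_left_pos)
      then show ?thesis using d by (simp add: field_simps)
    qed
    have "\<forall>j<n. cmod (v j) \<le> 1/\<delta>"
    proof (intro allI impI)
      fix j assume j: "j < n"
      have "(cmod (v j))\<^sup>2 \<le> S" unfolding S_def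
        using j by (intro member_le_sum) auto
      then have "cmod (v j) \<le> sqrt S" by (rule real_le_rsqrt)
      then show "cmod (v j) \<le> 1/\<delta>" using sS by simp
    qed
    then show ?thesis using Mv by blast
  qed
qed


theorem mainTheorem12:
  fixes p :: "nat \<Rightarrow> real" and m n :: nat
    and A :: "nat \<Rightarrow> nat \<Rightarrow> complex \<Rightarrow> complex"
    and b :: "nat \<Rightarrow> complex \<Rightarrow> complex"
  assumes "admissible_weight p"
    and "m \<ge> 1" and "n \<ge> 1"
    and "\<forall>i<m. \<forall>j<n. A i j \<in> Ap p"
    and "\<forall>i<m. b i \<in> Ap p"
  shows "(\<exists>x. (\<forall>j<n. x j \<in> Ap p) \<and> (\<forall>i<m. mat_hprod p n A x i = b i))
     \<longleftrightarrow> (\<exists>\<delta>>0. \<forall>k::nat. \<forall>y::nat \<Rightarrow> complex.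
            adj_apply_norm m n (\<lambda>i j. coef (A i j) k) y
              \<ge> \<delta> * cmod (inner2 m y (\<lambda>i. coef (b i) k)))"
proof -
  note adm = assms(1)
  have pp: "\<And>k. p k > 0" using adm unfolding admissible_weight_def by auto
  have AAp: "\<And>i j. i < m \<Longrightarrow> j < n \<Longrightarrow> A i j \<in> Ap p" using assms(4) by blast
  have bAp: "\<And>i. i < m \<Longrightarrow> b i \<in> Ap p" using assms(5) by blast
  have mh: "mat_hprod p n A x i = (\<lambda>z. \<Sum>j<n. hprod p (A i j) (x j) z)" for x i
    unfolding mat_hprod_def ..
  have coef_mh: "coef (mat_hprod p n A x i) k = (\<Sum>j<n. of_real (p k) * coef (A i j) k * coef (x j) k)"
    and hol_mh: "mat_hprod p n A x i holomorphic_on UNIV"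
    if i: "i < m" and x: "\<forall>j<n. x j \<in> Ap p" for x i k
  proof -
    have h: "\<And>j. j < n \<Longrightarrow> hprod p (A i j) (x j) holomorphic_on UNIV"
      using hprod_props(1)[OF adm AAp[OF i] ] x by blast
    show "coef (mat_hprod p n A x i) k = (\<Sum>j<n. of_real (p k) * coef (A i j) k * coef (x j) k)"
      unfolding mh using coef_sum[of n "\<lambda>j. hprod p (A i j) (x j)" k, OF h]
      using hprod_props(2)[OF adm AAp[OF i]] x by simp
    show "mat_hprod p n A x i holomorphic_on UNIV"
      unfolding mh using h by (intro holomorphic_on_sum) auto
  qed
  show ?thesis
  proof
    assume "\<exists>x. (\<forall>j<n. x j \<in> Ap p) \<and> (\<forall>i<m. mat_hprod p n A x i = b i)"
    then obtain x where x: "\<forall>j<n. x j \<in> Ap p" and eq: "\<forall>i<m. mat_hprod p n A x i = b i" by blast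
    have "\<forall>j. \<exists>C. j < n \<longrightarrow> (\<forall>k. p k * cmod (coef (x j) k) \<le> C)"
      using x Ap_bound[OF adm] by metis
    then obtain Cf where Cf: "\<And>j k. j < n \<Longrightarrow> p k * cmod (coef (x j) k) \<le> Cf j"
      by metis
    define C where "C = (\<Sum>j<n. \<bar>Cf j\<bar>)"
    have C0: "C \<ge> 0" unfolding C_def by (intro sum_nonneg) auto
    have CC: "p k * cmod (coef (x j) k) \<le> C" if "j < n" for j k
    proof -
      have "Cf j \<le> \<bar>Cf j\<bar>" by simp
      also have "\<bar>Cf j\<bar> \<le> C" unfolding C_def using that by (intro member_le_sum) auto
      finally show ?thesis using Cf[OF that, of k] by simp
    qed
    define \<delta> where "\<delta> = 1 / (real n * C + 1)"
    have d0: "\<delta> > 0" unfolding \<delta>_def using C0 by (simp add: add_nonneg_pos)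
    have "\<forall>k y. adj_apply_norm m n (\<lambda>i j. coef (A i j) k) y
              \<ge> \<delta> * cmod (inner2 m y (\<lambda>i. coef (b i) k))"
    proof (intro allI)
      fix k and y :: "nat \<Rightarrow> complex"
      define M where "M i j = coef (A i j) k" for i j
      define V where "V j = of_real (p k) * coef (x j) k" for j
      define a where "a j = (\<Sum>i<m. cnj (M i j) * y i)" for j
      define NN where "NN = adj_apply_norm m n M y"
      have NN: "NN = sqrt (\<Sum>j<n. (cmod (a j))\<^sup>2)" unfolding NN_def adj_apply_norm_def a_def ..
      have aN: "cmod (a j) \<le> NN" if "j < n" for j
        unfolding NN using that by (intro real_le_rsqrt member_le_sum) auto
      have V: "cmod (V j) \<le> C" if "j < n" for j
        using CC[OF that, of k] pp[of k] by (simp add: V_def norm_mult)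
      have bk: "coef (b i) k = (\<Sum>j<n. M i j * V j)" if "i < m" for i
        using coef_mh[OF that x, of k] eq that unfolding M_def V_def by (simp add: ac_simps)
      have "inner2 m y (\<lambda>i. coef (b i) k) = (\<Sum>i<m. y i * cnj (\<Sum>j<n. M i j * V j))"
        unfolding inner2_def using bk by (intro sum.cong) auto
      also have "\<dots> = (\<Sum>i<m. \<Sum>j<n. cnj (V j) * (cnj (M i j) * y i))"
        by (simp add: cnj_sum sum_distrib_left mult.commute mult.left_commute)
      also have "\<dots> = (\<Sum>j<n. \<Sum>i<m. cnj (V j) * (cnj (M i j) * y i))" by (rule sum.swap)
      also have "\<dots> = (\<Sum>j<n. cnj (V j) * a j)" by (simp add: sum_distrib_left[symmetric] a_def)
      finally have inn: "inner2 m y (\<lambda>i. coef (b i) k) = (\<Sum>j<n. cnj (V j) * a j)" .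
      have "cmod (\<Sum>j<n. cnj (V j) * a j) \<le> (\<Sum>j<n. cmod (cnj (V j) * a j))" by (rule norm_sum)
      also have "\<dots> \<le> (\<Sum>j<n. C * NN)"
        using V aN by (intro sum_mono) (simp add: norm_mult mult_mono C0)
      also have "\<dots> = real n * C * NN" by simp
      finally have le: "cmod (inner2 m y (\<lambda>i. coef (b i) k)) \<le> real n * C * NN" unfolding inn .
      have NN0: "NN \<ge> 0" unfolding NN by (intro real_sqrt_ge_zero sum_nonneg) auto
      have "\<delta> * cmod (inner2 m y (\<lambda>i. coef (b i) k)) \<le> \<delta> * (real n * C * NN)"
        using le d0 by (simp add: mult_left_mono)
      also have "\<dots> = (real n * C / (real n * C + 1)) * NN" unfolding \<delta>_def by simp
      also have "\<dots> \<le> 1 * NN"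
      proof (rule mult_right_mono[OF _ NN0])
        have "real n * C \<ge> 0" using C0 by simp
        then show "real n * C / (real n * C + 1) \<le> 1" by (simp add: divide_le_eq)
      qed
      finally show "\<delta> * cmod (inner2 m y (\<lambda>i. coef (b i) k)) \<le> adj_apply_norm m n (\<lambda>i j. coef (A i j) k) y"
        unfolding NN_def M_def by simp
    qed
    then show "\<exists>\<delta>>0. \<forall>k y. adj_apply_norm m n (\<lambda>i j. coef (A i j) k) y
              \<ge> \<delta> * cmod (inner2 m y (\<lambda>i. coef (b i) k))" using d0 by blast
  next
    assume "\<exists>\<delta>>0. \<forall>k::nat. \<forall>y::nat \<Rightarrow> complex.
            adj_apply_norm m n (\<lambda>i j. coef (A i j) k) y
              \<ge> \<delta> * cmod (inner2 m y (\<lambda>i. coef (b i) k))"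
    then obtain \<delta> where d: "\<delta> > 0" and H: "\<forall>k::nat. \<forall>y::nat \<Rightarrow> complex.
            adj_apply_norm m n (\<lambda>i j. coef (A i j) k) y
              \<ge> \<delta> * cmod (inner2 m y (\<lambda>i. coef (b i) k))" by blast
    define P where "P k v \<longleftrightarrow> (\<forall>i<m. (\<Sum>j<n. coef (A i j) k * v j) = coef (b i) k) \<and> (\<forall>j<n. cmod (v j) \<le> 1/\<delta>)"
      for k and v :: "nat \<Rightarrow> complex"
    define V where "V k = (SOME v. P k v)" for k
    have PV: "P k (V k)" for k
    proof -
      have "\<exists>v. P k v" unfolding P_def
        using solve[OF d, where m=m and n=n and M="\<lambda>i j. coef (A i j) k" and bb="\<lambda>i. coef (b i) k"] H by blast
      then show ?thesis unfolding V_def by (rule someI_ex)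
    qed
    define c where "c j k = V k j / of_real (p k)" for j k
    define x where "x j = (\<lambda>z. \<Sum>k. c j k * z ^ k)" for j
    have ci: "conv_radius (c j) = \<infinity>" if "j < n" for j
    proof (rule conv_inf[OF adm])
      fix k
      have vb: "cmod (V k j) \<le> 1/\<delta>" using PV[of k] that unfolding P_def by blast
      have e: "cmod (c j k) = cmod (V k j) / p k" using pp[of k] unfolding c_def by (simp add: norm_divide)
      show "cmod (c j k) \<le> (1/\<delta>) / p k"
        unfolding e using vb pp[of k] by (intro divide_right_mono) auto
    qed
    have xhol: "x j holomorphic_on UNIV" if "j < n" for j
      unfolding x_def by (rule entire_series(1)[OF ci[OF that]])
    have xcoef: "coef (x j) k = V k j / of_real (p k)" if "j < n" for j k
      unfolding x_def using entire_series(2)[OF ci[OF that]] c_def by simp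
    have xAp: "\<forall>j<n. x j \<in> Ap p"
    proof (intro allI impI)
      fix j assume j: "j < n"
      have "p k * cmod (coef (x j) k) \<le> 1/\<delta>" for k
      proof -
        have "p k * cmod (coef (x j) k) = cmod (V k j)"
          using pp[of k] xcoef[OF j] by (simp add: norm_divide)
        also have "\<dots> \<le> 1/\<delta>" using PV[of k] j unfolding P_def by blast
        finally show ?thesis .
      qed
      then have "bdd_above (range (\<lambda>k. p k * cmod (coef (x j) k)))"
        by (intro bdd_aboveI2) 
      then show "x j \<in> Ap p" unfolding Ap_def using xhol[OF j] by blast
    qed
    have "\<forall>i<m. mat_hprod p n A x i = b i"
    proof (intro allI impI)
      fix i assume i: "i < m"
      show "mat_hprod p n A x i = b i"
      proof (rule coef_unique_entire)
        show "mat_hprod p n A x i holomorphic_on UNIV" by (rule hol_mh[OF i xAp])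
        show "b i holomorphic_on UNIV" using bAp[OF i] unfolding Ap_def by blast
        fix k
        have "coef (mat_hprod p n A x i) k = (\<Sum>j<n. of_real (p k) * coef (A i j) k * coef (x j) k)"
          by (rule coef_mh[OF i xAp])
        also have "\<dots> = (\<Sum>j<n. coef (A i j) k * V k j)"
          using pp[of k] xcoef by (intro sum.cong) (auto simp: field_simps)
        also have "\<dots> = coef (b i) k" using PV[of k] i unfolding P_def by blast
        finally show "coef (mat_hprod p n A x i) k = coef (b i) k" .
      qed
    qed
    then show "\<exists>x. (\<forall>j<n. x j \<in> Ap p) \<and> (\<forall>i<m. mat_hprod p n A x i = b i)"
      using xAp by blast
  qed
qed

end
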